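(* Consider the value iteration algorithm described in the context, producing functions $V^n$ for $n\ge0$. Then for every $n\ge 0$, every $s\in\mathcal{S}$ and every $k\in\{1,\dots,K-1\}$, $$V^{n}(s,k+1)-V^{n}(s,k)\ \le\ V^{n}(s,k)-V^{n}(s,k-1).$$
   Context: Model (token-based D2D transmission for one user). Let $\mathcal{S}=\{s_0,s_1,\dots,s_N\}$ be a finite set of traffic types, where $s_0$ denotes the idle state. Each $s\in\mathcal{S}$ has a probability $p(s)\in(0,1)$ with $\sum_{s\in\mathcal{S}}p(s)=1$. Each non-idle type $s\in\{s_1,\dots,s_N\}$ has a benefit $b_s$, with $0<b_{s_1}<\dots<b_{s_N}$. Fix an integer $K\ge1$, a cost $c>0$, parameters $p,q\in(0,1)$ and a discount factor $\beta\in(0,1)$. States are $(s,k)$ with $s\in\mathcal{S}$, $k\in\{0,\dots,K\}$; actions are $a\in\{0,1\}$. Transition probabilities $P\{(s',k')\mid(s,k),a\}$: for $s\ne s_0,k>0$: $p(s')\{(1-a)+a(1-q)\}$ if $k'=k$, $p(s')qa$ if $k'=k-1$; for $s\ne s_0,k=0$: $p(s')$ if $k'=0$; for $s=s_0,k<K$: $p(s')\{a+(1-a)(1-p)\}$ if $k'=k$, $p(s')p(1-a)$ if $k'=k+1$; for $s=s_0,k=K$: $p(s')$ if $k'=K$; otherwise $0$. Expected rewards: $\mu(s_0,k,a)=-cp(1-a)$ and, for $s\ne s_0$, $\mu(s,k,a)=q\,a\,b_s\,I(k>0)$. Value iteration: $V^0(s,k)=0$ for all $(s,k)$. Given $V^n$,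 define the policy $\pi^{n+1}$ by $\pi^{n+1}(s,0)=0$ for $s\ne s_0$, $\pi^{n+1}(s_0,K)=1$; for $s\ne s_0$ and $k\ge1$, $\pi^{n+1}(s,k)=0$ if $\beta\sum_{s'\in\mathcal{S}}p(s')\{V^n(s',k)-V^n(s',k-1)\}\ge b_s$ and $\pi^{n+1}(s,k)=1$ otherwise; for $k<K$, $\pi^{n+1}(s_0,k)=0$ if $\beta\sum_{s'\in\mathcal{S}}p(s')\{V^n(s',k+1)-V^n(s',k)\}\ge c$ and $\pi^{n+1}(s_0,k)=1$ otherwise. Then $V^{n+1}(s,k)=\mu(s,k,\pi^{n+1}(s,k))+\beta\sum_{(s',k')}P\{(s',k')\mid(s,k),\pi^{n+1}(s,k)\}V^n(s',k')$. *)

theory Defs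
  imports Main "HOL.Real"
begin

text \<open>Traffic types are encoded as natural numbers 0..N, with 0 the idle type s0
  and i (1 \<le> i \<le> N) the non-idle type s_i.  pr is the type distribution p(s),
  b the benefit, and actions are the naturals 0 and 1.\<close>

definition trans :: "nat \<Rightarrow> (nat \<Rightarrow> real) \<Rightarrow> real \<Rightarrow> real \<Rightarrow>
    nat \<Rightarrow> nat \<Rightarrow> nat \<Rightarrow> nat \<Rightarrow> nat \<Rightarrow> real" where
  "trans K pr p q s k a s' k' =
    (let a' = real a in
     if s \<noteq> 0 \<and> 0 < k then
       (if k' = k then pr s' * ((1 - a') + a' * (1 - q))
        else if k' = k - 1 then pr s' * q * a' else 0)
     else if s \<noteq> 0 \<and> k = 0 then (if k' = 0 then pr s' else 0)
     else if s = 0 \<and> k < K then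
       (if k' = k then pr s' * (a' + (1 - a') * (1 - p))
        else if k' = k + 1 then pr s' * p * (1 - a') else 0)
     else if s = 0 \<and> k = K then (if k' = K then pr s' else 0)
     else 0)"

definition reward :: "(nat \<Rightarrow> real) \<Rightarrow> real \<Rightarrow> real \<Rightarrow> real \<Rightarrow> nat \<Rightarrow> nat \<Rightarrow> nat \<Rightarrow> real" where
  "reward b c p q s k a =
    (if s = 0 then - c * p * (1 - real a)
     else q * real a * b s * (if 0 < k then 1 else 0))"

definition policy :: "nat \<Rightarrow> nat \<Rightarrow> (nat \<Rightarrow> real) \<Rightarrow> (nat \<Rightarrow> real) \<Rightarrow> real \<Rightarrow> real \<Rightarrow>
    (nat \<Rightarrow> nat \<Rightarrow> real) \<Rightarrow> nat \<Rightarrow> nat \<Rightarrow> nat" where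
  "policy N K pr b c \<beta> W s k =
    (if s \<noteq> 0 then
       (if k = 0 then 0
        else if \<beta> * (\<Sum>s'\<in>{0..N}. pr s' * (W s' k - W s' (k - 1))) \<ge> b s then 0 else 1)
     else
       (if k = K then 1
        else if \<beta> * (\<Sum>s'\<in>{0..N}. pr s' * (W s' (k + 1) - W s' k)) \<ge> c then 0 else 1))"

primrec VI :: "nat \<Rightarrow> nat \<Rightarrow> (nat \<Rightarrow> real) \<Rightarrow> (nat \<Rightarrow> real) \<Rightarrow> real \<Rightarrow> real \<Rightarrow> real \<Rightarrow> real \<Rightarrow>
    nat \<Rightarrow> nat \<Rightarrow> nat \<Rightarrow> real" where
  "VI N K pr b c p q \<beta> 0 = (\<lambda>s k. 0)"
| "VI N K pr b c p q \<beta> (Suc n) =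
    (\<lambda>s k. let a = policy N K pr b c \<beta> (VI N K pr b c p q \<beta> n) s k in
       reward b c p q s k a
       + \<beta> * (\<Sum>s'\<in>{0..N}. \<Sum>k'\<in>{0..K}.
                 trans K pr p q s k a s' k' * VI N K pr b c p q \<beta> n s' k'))"

end

theory Submission
  imports Defs
begin

definition Ex :: "nat \<Rightarrow> (nat \<Rightarrow> real) \<Rightarrow> (nat \<Rightarrow> nat \<Rightarrow> real) \<Rightarrow> nat \<Rightarrow> real" where
  "Ex N pr W k = (\<Sum>s'\<in>{0..N}. pr s' * W s' k)"

lemma inner1:
  fixes w :: "nat \<Rightarrow> real"
  assumes "k \<le> K" "j \<le> K" "j \<noteq> k"
  shows "(\<Sum>k'\<in>{0..K}. (if k' = k then X else if k' = j then Y else 0) * w k') = X * w k + Y * w j"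
proof -
  have "(\<Sum>k'\<in>{0..K}. (if k' = k then X else if k' = j then Y else 0) * w k')
      = (\<Sum>k'\<in>{0..K}. (if k' = k then X * w k else 0) + (if k' = j then Y * w j else 0))"
    by (rule sum.cong) (use assms in auto)
  also have "\<dots> = X * w k + Y * w j" using assms by (simp add: sum.distrib)
  finally show ?thesis .
qed

lemma inner0:
  fixes w :: "nat \<Rightarrow> real"
  assumes "k \<le> K"
  shows "(\<Sum>k'\<in>{0..K}. (if k' = k then X else 0) * w k') = X * w k"
proof -
  have "(\<Sum>k'\<in>{0..K}. (if k' = k then X else 0) * w k')
      = (\<Sum>k'\<in>{0..K}. (if k' = k then X * w k else 0))"
    by (rule sum.cong) auto
  also have "\<dots> = X * w k" using assms by simp
  finally show ?thesis .
qed

lemma sumtrans_nz: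
  assumes "s \<noteq> 0" "0 < k" "k \<le> K"
  shows "(\<Sum>s'\<in>{0..N}. \<Sum>k'\<in>{0..K}. trans K pr p q s k a s' k' * W s' k')
     = (1 - q * real a) * Ex N pr W k + q * real a * Ex N pr W (k - 1)"
proof -
  have "\<And>s'. (\<Sum>k'\<in>{0..K}. trans K pr p q s k a s' k' * W s' k')
     = (\<Sum>k'\<in>{0..K}. (if k' = k then pr s' * (1 - q * real a) else if k' = k - 1 then pr s' * q * real a else 0) * W s' k')"
    by (rule sum.cong) (use assms in \<open>auto simp: trans_def Let_def algebra_simps\<close>)
  also have "\<And>s'. (\<Sum>k'\<in>{0..K}. (if k' = k then pr s' * (1 - q * real a) else if k' = k - 1 then pr s' * q * real a else 0) * W s' k')
     = (1 - q * real a) * (pr s' * W s' k) + q * real a * (pr s' * W s' (k - 1))"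
    using assms by (subst inner1) auto
  finally show ?thesis
    by (simp add: Ex_def sum.distrib sum_distrib_left)
qed

lemma sumtrans_nz0:
  assumes "s \<noteq> 0"
  shows "(\<Sum>s'\<in>{0..N}. \<Sum>k'\<in>{0..K}. trans K pr p q s 0 a s' k' * W s' k') = Ex N pr W 0"
proof -
  have "\<And>s'. (\<Sum>k'\<in>{0..K}. trans K pr p q s 0 a s' k' * W s' k')
     = (\<Sum>k'\<in>{0..K}. (if k' = 0 then pr s' else 0) * W s' k')"
    by (rule sum.cong) (use assms in \<open>auto simp: trans_def Let_def\<close>)
  also have "\<And>s'. \<dots> s' = pr s' * W s' 0" by (subst inner0) auto
  finally show ?thesis by (simp add: Ex_def)
qed

lemma sumtrans_z:
  assumes "k < K"
  shows "(\<Sum>s'\<in>{0..N}. \<Sum>k'\<in>{0..K}. trans K pr p q 0 k a s' k' * W s' k')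
     = (real a + (1 - real a) * (1 - p)) * Ex N pr W k + p * (1 - real a) * Ex N pr W (k + 1)"
proof -
  have "\<And>s'. (\<Sum>k'\<in>{0..K}. trans K pr p q 0 k a s' k' * W s' k')
     = (\<Sum>k'\<in>{0..K}. (if k' = k then pr s' * (real a + (1 - real a) * (1 - p)) else if k' = k + 1 then pr s' * p * (1 - real a) else 0) * W s' k')"
    by (rule sum.cong) (use assms in \<open>auto simp: trans_def Let_def algebra_simps\<close>)
  also have "\<And>s'. \<dots> s' = (real a + (1 - real a) * (1 - p)) * (pr s' * W s' k) + p * (1 - real a) * (pr s' * W s' (k + 1))"
    using assms by (subst inner1) auto
  finally show ?thesis
    by (simp add: Ex_def sum.distrib sum_distrib_left)
qed

lemma sumtrans_zK:
  shows "(\<Sum>s'\<in>{0..N}. \<Sum>k'\<in>{0..K}. trans K pr p q 0 K a s' k' * W s' k') = Ex N pr W K"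
proof -
  have "\<And>s'. (\<Sum>k'\<in>{0..K}. trans K pr p q 0 K a s' k' * W s' k')
     = (\<Sum>k'\<in>{0..K}. (if k' = K then pr s' else 0) * W s' k')"
    by (rule sum.cong) (auto simp: trans_def Let_def)
  also have "\<And>s'. \<dots> s' = pr s' * W s' K" by (subst inner0) auto
  finally show ?thesis by (simp add: Ex_def)
qed

lemma Ex_diff: "(\<Sum>s'\<in>{0..N}. pr s' * (W s' i - W s' j)) = Ex N pr W i - Ex N pr W j"
  by (simp add: Ex_def right_diff_distrib sum_subtractf)


lemma pol_nz:
  assumes "s \<noteq> 0" "1 \<le> k"
  shows "policy N K pr b c \<beta> W s k = (if \<beta> * (Ex N pr W k - Ex N pr W (k - 1)) \<ge> b s then 0 else 1)"
  using assms unfolding policy_def Ex_diff by simp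

lemma pol_z:
  assumes "k < K"
  shows "policy N K pr b c \<beta> W 0 k = (if \<beta> * (Ex N pr W (k + 1) - Ex N pr W k) \<ge> c then 0 else 1)"
  using assms unfolding policy_def Ex_diff by simp

lemma step_nz:
  assumes "s \<noteq> 0" "1 \<le> k" "k \<le> K"
  shows "reward b c p q s k (policy N K pr b c \<beta> W s k)
       + \<beta> * (\<Sum>s'\<in>{0..N}. \<Sum>k'\<in>{0..K}. trans K pr p q s k (policy N K pr b c \<beta> W s k) s' k' * W s' k')
     = \<beta> * Ex N pr W k + q * max 0 (b s - \<beta> * (Ex N pr W k - Ex N pr W (k - 1)))"
proof -
  have k0: "0 < k" using assms by simp
  show ?thesis
  proof (cases "\<beta> * (Ex N pr W k - Ex N pr W (k - 1)) \<ge> b s")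
    case True
    then have "policy N K pr b c \<beta> W s k = 0" using pol_nz[OF assms(1,2)] by simp
    then show ?thesis using True assms unfolding sumtrans_nz[OF assms(1) k0 assms(3)] by (simp add: reward_def max_def)
  next
    case False
    then have "policy N K pr b c \<beta> W s k = 1" using pol_nz[OF assms(1,2)] by simp
    then show ?thesis using False assms
      unfolding sumtrans_nz[OF assms(1) k0 assms(3)] by (simp add: reward_def max_def algebra_simps)
  qed
qed

lemma step_z:
  assumes "k < K"
  shows "reward b c p q 0 k (policy N K pr b c \<beta> W 0 k)
       + \<beta> * (\<Sum>s'\<in>{0..N}. \<Sum>k'\<in>{0..K}. trans K pr p q 0 k (policy N K pr b c \<beta> W 0 k) s' k' * W s' k')
     = \<beta> * Ex N pr W k + p * max 0 (\<beta> * (Ex N pr W (k + 1) - Ex N pr W k) - c)"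
proof (cases "\<beta> * (Ex N pr W (k + 1) - Ex N pr W k) \<ge> c")
  case True
  then have "policy N K pr b c \<beta> W 0 k = 0" using pol_z[OF assms] by simp
  then show ?thesis using True assms unfolding sumtrans_z[OF assms] by (simp add: reward_def max_def algebra_simps)
next
  case False
  then have "policy N K pr b c \<beta> W 0 k = 1" using pol_z[OF assms] by simp
  then show ?thesis using False assms unfolding sumtrans_z[OF assms] by (simp add: reward_def max_def)
qed

lemma step_nz0:
  assumes "s \<noteq> 0"
  shows "reward b c p q s 0 (policy N K pr b c \<beta> W s 0)
       + \<beta> * (\<Sum>s'\<in>{0..N}. \<Sum>k'\<in>{0..K}. trans K pr p q s 0 (policy N K pr b c \<beta> W s 0) s' k' * W s' k')
     = \<beta> * Ex N pr W 0"
  using assms by (simp add: sumtrans_nz0 policy_def reward_def)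

lemma step_zK:
  shows "reward b c p q 0 K (policy N K pr b c \<beta> W 0 K)
       + \<beta> * (\<Sum>s'\<in>{0..N}. \<Sum>k'\<in>{0..K}. trans K pr p q 0 K (policy N K pr b c \<beta> W 0 K) s' k' * W s' k')
     = \<beta> * Ex N pr W K"
  by (simp add: sumtrans_zK policy_def reward_def)

lemma VI_nz:
  assumes "s \<noteq> 0" "1 \<le> k" "k \<le> K"
  shows "VI N K pr b c p q \<beta> (Suc n) s k =
    \<beta> * Ex N pr (VI N K pr b c p q \<beta> n) k
    + q * max 0 (b s - \<beta> * (Ex N pr (VI N K pr b c p q \<beta> n) k - Ex N pr (VI N K pr b c p q \<beta> n) (k - 1)))"
  unfolding VI.simps Let_def by (rule step_nz[OF assms])

lemma VI_nz0:
  assumes "s \<noteq> 0"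
  shows "VI N K pr b c p q \<beta> (Suc n) s 0 = \<beta> * Ex N pr (VI N K pr b c p q \<beta> n) 0"
  unfolding VI.simps Let_def by (rule step_nz0[OF assms])

lemma VI_z:
  assumes "k < K"
  shows "VI N K pr b c p q \<beta> (Suc n) 0 k =
    \<beta> * Ex N pr (VI N K pr b c p q \<beta> n) k
    + p * max 0 (\<beta> * (Ex N pr (VI N K pr b c p q \<beta> n) (k + 1) - Ex N pr (VI N K pr b c p q \<beta> n) k) - c)"
  unfolding VI.simps Let_def by (rule step_z[OF assms])

lemma VI_zK:
  shows "VI N K pr b c p q \<beta> (Suc n) 0 K = \<beta> * Ex N pr (VI N K pr b c p q \<beta> n) K"
  unfolding VI.simps Let_def by (rule step_zK)

lemma arithA:
  fixes x1 x2 x3 q b :: real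
  assumes "x3 \<le> x2" "x2 \<le> x1" "0 \<le> q" "q \<le> 1"
  shows "x3 + q * max 0 (b - x3) - q * max 0 (b - x2) \<le> x2 + q * max 0 (b - x2) - q * max 0 (b - x1)"
proof -
  have h1: "q * max 0 (b - x3) - q * max 0 (b - x2) \<le> q * (x2 - x3)"
  proof -
    have "max 0 (b - x3) - max 0 (b - x2) \<le> x2 - x3" using assms by (auto simp: max_def)
    from mult_left_mono[OF this assms(3)] show ?thesis by (simp add: algebra_simps)
  qed
  have h2: "q * (x2 - x3) \<le> x2 - x3" using assms mult_right_mono[of q 1 "x2 - x3"] by simp
  have h3: "0 \<le> q * max 0 (b - x2) - q * max 0 (b - x1)"
  proof -
    have "max 0 (b - x1) \<le> max 0 (b - x2)" using assms by (auto simp: max_def)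
    from mult_left_mono[OF this assms(3)] show ?thesis by simp
  qed
  show ?thesis using h1 h2 h3 assms by linarith
qed

lemma arithA1:
  fixes x2 x3 q b :: real
  assumes "x3 \<le> x2" "0 \<le> q" "q \<le> 1"
  shows "x3 + q * max 0 (b - x3) - q * max 0 (b - x2) \<le> x2 + q * max 0 (b - x2)"
proof -
  have "max 0 (b - max x2 b) = 0" by (simp add: max_def)
  then show ?thesis using arithA[of x3 x2 "max x2 b" q b] assms by simp
qed

lemma arithB:
  fixes x1 x2 x3 p c :: real
  assumes "x3 \<le> x2" "x2 \<le> x1" "0 \<le> p" "p \<le> 1"
  shows "x2 + p * max 0 (x3 - c) - p * max 0 (x2 - c) \<le> x1 + p * max 0 (x2 - c) - p * max 0 (x1 - c)"
proof -
  have h1: "p * max 0 (x1 - c) - p * max 0 (x2 - c) \<le> p * (x1 - x2)"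
  proof -
    have "max 0 (x1 - c) - max 0 (x2 - c) \<le> x1 - x2" using assms by (auto simp: max_def)
    from mult_left_mono[OF this assms(3)] show ?thesis by (simp add: algebra_simps)
  qed
  have h2: "p * (x1 - x2) \<le> x1 - x2" using assms mult_right_mono[of p 1 "x1 - x2"] by simp
  have h3: "p * max 0 (x3 - c) \<le> p * max 0 (x2 - c)"
  proof -
    have "max 0 (x3 - c) \<le> max 0 (x2 - c)" using assms by (auto simp: max_def)
    from mult_left_mono[OF this assms(3)] show ?thesis by simp
  qed
  show ?thesis using h1 h2 h3 by linarith
qed

lemma arithB1:
  fixes x1 x2 p c :: real
  assumes "x2 \<le> x1" "0 \<le> p" "p \<le> 1"
  shows "x2 - p * max 0 (x2 - c) \<le> x1 + p * max 0 (x2 - c) - p * max 0 (x1 - c)"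
proof -
  have "x2 + p * max 0 (x2 - c) - p * max 0 (x2 - c) \<le> x1 + p * max 0 (x2 - c) - p * max 0 (x1 - c)"
    using arithB[of x2 x2 x1 p c] assms by simp
  moreover have "0 \<le> p * max 0 (x2 - c)" using assms by simp
  ultimately show ?thesis by linarith
qed


declare VI.simps(2)[simp del]

theorem theorem1:
  fixes N K :: nat and pr b :: "nat \<Rightarrow> real" and c p q \<beta> :: real
  assumes "1 \<le> N"
    and "\<And>s. s \<le> N \<Longrightarrow> 0 < pr s \<and> pr s < 1"
    and "(\<Sum>s\<in>{0..N}. pr s) = 1"
    and "0 < b 1"
    and "\<And>i j. 1 \<le> i \<Longrightarrow> i < j \<Longrightarrow> j \<le> N \<Longrightarrow> b i < b j"
    and "1 \<le> K" and "0 < c"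
    and "0 < p" "p < 1" "0 < q" "q < 1" "0 < \<beta>" "\<beta> < 1"
  shows "\<forall>n s k. s \<le> N \<longrightarrow> 1 \<le> k \<longrightarrow> k \<le> K - 1 \<longrightarrow>
     VI N K pr b c p q \<beta> n s (k + 1) - VI N K pr b c p q \<beta> n s k
       \<le> VI N K pr b c p q \<beta> n s k - VI N K pr b c p q \<beta> n s (k - 1)"
proof (rule allI)
  fix n
  show "\<forall>s k. s \<le> N \<longrightarrow> 1 \<le> k \<longrightarrow> k \<le> K - 1 \<longrightarrow>
     VI N K pr b c p q \<beta> n s (k + 1) - VI N K pr b c p q \<beta> n s k
       \<le> VI N K pr b c p q \<beta> n s k - VI N K pr b c p q \<beta> n s (k - 1)"
  proof (induction n)
    case 0
    then show ?case by simp
  next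
    case (Suc n)
    let ?V = "VI N K pr b c p q \<beta> n"
    let ?V' = "VI N K pr b c p q \<beta> (Suc n)"
    define E where "E = Ex N pr ?V"
    define x where "x = (\<lambda>j. \<beta> * (E j - E (j - 1)))"
    have Emono: "E (k + 1) - E k \<le> E k - E (k - 1)" if "1 \<le> k" "k \<le> K - 1" for k
    proof -
      have "(E (k + 1) - E k) - (E k - E (k - 1))
          = (\<Sum>s\<in>{0..N}. pr s * ((?V s (k + 1) - ?V s k) - (?V s k - ?V s (k - 1))))"
        unfolding E_def Ex_def by (simp add: sum_subtractf[symmetric] algebra_simps)
      also have "\<dots> \<le> 0"
      proof (rule sum_nonpos)
        fix s assume "s \<in> {0..N}"
        then have sN: "s \<le> N" by simp
        have h: "?V s (k + 1) - ?V s k \<le> ?V s k - ?V s (k - 1)"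
          using Suc.IH[rule_format, OF sN that] .
        have "0 \<le> pr s" "(?V s (k + 1) - ?V s k) - (?V s k - ?V s (k - 1)) \<le> 0"
          using assms(2)[OF sN] h by auto
        then show "pr s * ((?V s (k + 1) - ?V s k) - (?V s k - ?V s (k - 1))) \<le> 0"
          by (simp add: mult_nonneg_nonpos)
      qed
      finally show ?thesis by simp
    qed
    have xmono: "x (k + 1) \<le> x k" if "1 \<le> k" "k \<le> K - 1" for k
      unfolding x_def using Emono[OF that] assms(12) by (simp add: mult_left_mono)
    have xE: "\<beta> * E (j + 1) - \<beta> * E j = x (j + 1)" for j
      unfolding x_def by (simp add: algebra_simps)
    show ?case
    proof (intro allI impI)
      fix s k assume s: "s \<le> N" and k1: "1 \<le> k" and kK: "k \<le> K - 1"
      show "?V' s (k + 1) - ?V' s k \<le> ?V' s k - ?V' s (k - 1)"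
      proof (cases "s = 0")
        case False
        have A: "?V' s (k + 1) = \<beta> * E (k + 1) + q * max 0 (b s - x (k + 1))"
          using VI_nz[OF False, of "k + 1" K] k1 kK unfolding E_def x_def by simp
        have B: "?V' s k = \<beta> * E k + q * max 0 (b s - x k)"
          using VI_nz[OF False, of k K] k1 kK unfolding E_def x_def by simp
        show ?thesis
        proof (cases "k = 1")
          case True
          have C: "?V' s (k - 1) = \<beta> * E (k - 1)"
            using VI_nz0[OF False] True unfolding E_def by simp
          have xk: "\<beta> * E k - \<beta> * E (k - 1) = x k" unfolding x_def by (simp add: algebra_simps)
          have "x (k + 1) + q * max 0 (b s - x (k + 1)) - q * max 0 (b s - x k)
               \<le> x k + q * max 0 (b s - x k)"
            using arithA1[of "x (k + 1)" "x k" q "b s"] xmono[OF k1 kK] assms by simp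
          then show ?thesis using A B C xE[of k] xk by simp
        next
          case False2: False
          have C: "?V' s (k - 1) = \<beta> * E (k - 1) + q * max 0 (b s - x (k - 1))"
            using VI_nz[OF False, of "k - 1" K] k1 kK False2 unfolding E_def x_def by simp
          have xk: "\<beta> * E k - \<beta> * E (k - 1) = x k" unfolding x_def by (simp add: algebra_simps)
          have m2: "x k \<le> x (k - 1)" using xmono[of "k - 1"] k1 kK False2 by simp
          have "x (k + 1) + q * max 0 (b s - x (k + 1)) - q * max 0 (b s - x k)
               \<le> x k + q * max 0 (b s - x k) - q * max 0 (b s - x (k - 1))"
            using arithA[of "x (k + 1)" "x k" "x (k - 1)" q "b s"] xmono[OF k1 kK] m2 assms by simp
          then show ?thesis using A B C xE[of k] xk by simp
        qed
      next
        case True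
        have B: "?V' 0 k = \<beta> * E k + p * max 0 (x (k + 1) - c)"
          using VI_z[of k K] k1 kK unfolding E_def x_def by simp
        have C: "?V' 0 (k - 1) = \<beta> * E (k - 1) + p * max 0 (x k - c)"
          using VI_z[of "k - 1" K] k1 kK unfolding E_def x_def by simp
        have xk: "\<beta> * E k - \<beta> * E (k - 1) = x k" unfolding x_def by (simp add: algebra_simps)
        show ?thesis
        proof (cases "k + 1 = K")
          case True2: True
          have A: "?V' 0 (k + 1) = \<beta> * E (k + 1)"
            using VI_zK[of N K] True2 unfolding E_def by simp
          have "x (k + 1) - p * max 0 (x (k + 1) - c) \<le> x k + p * max 0 (x (k + 1) - c) - p * max 0 (x k - c)"
            using arithB1[of "x (k + 1)" "x k" p c] xmono[OF k1 kK] assms by simp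
          then show ?thesis using A B C xE[of k] xk True by simp
        next
          case False2: False
          have A: "?V' 0 (k + 1) = \<beta> * E (k + 1) + p * max 0 (x (k + 2) - c)"
            using VI_z[of "k + 1" K] k1 kK False2 unfolding E_def x_def by simp
          have m2: "x (k + 2) \<le> x (k + 1)" using xmono[of "k + 1"] k1 kK False2 by simp
          have "x (k + 1) + p * max 0 (x (k + 2) - c) - p * max 0 (x (k + 1) - c)
               \<le> x k + p * max 0 (x (k + 1) - c) - p * max 0 (x k - c)"
            using arithB[of "x (k + 2)" "x (k + 1)" "x k" p c] xmono[OF k1 kK] m2 assms by simp
          then show ?thesis using A B C xE[of k] xk True by simp
        qed
      qed
    qed
  qed
qed

end
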